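(* For every integer $k\ge1$ and every $x\in\mathbb{C}$, $$\sum_{n=0}^{k}p(n)x^n=\det\big[d_{i-j}-x\,d_{i-j+1}\big]_{0\le i,j\le k-1}.$$
   Context: $p(n)$ is the number of partitions of $n$ ($p(0)=1$). With $q_m=m(3m-1)/2$ ($m\in\mathbb{Z}$) the generalized pentagonal numbers, $d_q=(-1)^m$ if $q=q_m$ for some $m$, $d_q=0$ for other integers $q\ge0$, and $d_q=0$ for $q<0$; thus $\sum_{q\ge0}d_qz^q=\prod_{k\ge1}(1-z^k)$. *)

theory Defs
  imports Complex_Main "HOL-Library.Multiset" "Jordan_Normal_Form.Determinant"
begin

definition partition_count :: "nat \<Rightarrow> nat" where
  "partition_count n = card {M :: nat multiset. (\<forall>x\<in>#M. 0 < x) \<and> sum_mset M = n}"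

definition pent_coeff :: "int \<Rightarrow> complex" where
  "pent_coeff q = (if 0 \<le> q \<and> (\<exists>m::int. 2 * q = m * (3 * m - 1))
     then (-1) ^ nat \<bar>THE m::int. 2 * q = m * (3 * m - 1)\<bar> else 0)"

end

theory Submission
  imports Defs
begin


fun run :: "nat list \<Rightarrow> nat" where
  "run [] = 0"
| "run [x] = 1"
| "run (x # y # ys) = (if x = Suc y then Suc (run (y # ys)) else 1)"

lemma run_pos: "L \<noteq> [] \<Longrightarrow> 0 < run L"
  by (induction L rule: run.induct) auto

lemma run_le: "run L \<le> length L"
  by (induction L rule: run.induct) auto

lemma run_consec: "i < run L \<Longrightarrow> L ! i + i = L ! 0"
proof (induction L arbitrary: i rule: run.induct)
  case (3 x y ys)
  show ?case
  proof (cases i)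
    case (Suc j)
    with 3 have "x = Suc y" "j < run (y # ys)" by (auto split: if_splits)
    with 3(1) Suc show ?thesis by auto
  qed simp
qed auto

lemma run_max: "0 < run L \<Longrightarrow> run L < length L \<Longrightarrow> L ! (run L - 1) \<noteq> Suc (L ! run L)"
proof (induction L rule: run.induct)
  case (3 x y ys)
  show ?case
  proof (cases "x = Suc y")
    case True
    then have r: "run (x # y # ys) = Suc (run (y # ys))" by simp
    have "0 < run (y # ys)" by (rule run_pos) simp
    moreover have "run (y # ys) < length (y # ys)" using 3(3) r by simp
    ultimately have "(y # ys) ! (run (y # ys) - 1) \<noteq> Suc ((y # ys) ! run (y # ys))"
      using 3(1) True by blast
    then show ?thesis unfolding r using \<open>0 < run (y # ys)\<close> by (cases "run (y # ys)") auto
  next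
    case False
    then show ?thesis by simp
  qed
qed auto

lemma run_app:
  assumes "xs \<noteq> []" "run xs = length xs"
  shows "run (xs @ ys) = (if ys \<noteq> [] \<and> last xs = Suc (hd ys) then length xs + run ys else length xs)"
  using assms
proof (induction xs rule: run.induct)
  case (2 x)
  then show ?case by (cases ys) auto
next
  case (3 x y zs)
  then have "x = Suc y" by (auto split: if_splits)
  with 3 show ?case by auto
qed auto

lemma run_map_Suc: "run (map Suc xs) = run xs"
  by (induction xs rule: run.induct) auto

lemma run_map_pred: "0 \<notin> set xs \<Longrightarrow> run (map (\<lambda>y. y - 1) xs) = run xs"
  by (induction xs rule: run.induct) auto

lemma run_take: "0 < s \<Longrightarrow> s \<le> run L \<Longrightarrow> run (take s L) = s"
proof (induction L arbitrary: s rule: run.induct)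
  case (2 x)
  then show ?case by (cases s) auto
next
  case (3 x y ys)
  show ?case
  proof (cases s)
    case (Suc t)
    show ?thesis
    proof (cases t)
      case 0 then show ?thesis using Suc by simp
    next
      case (Suc u)
      with 3 \<open>s = Suc t\<close> have "x = Suc y" "t \<le> run (y # ys)" by (auto split: if_splits)
      with 3(1)[of t] Suc \<open>s = Suc t\<close> show ?thesis by simp
    qed
  qed (use 3 in simp)
qed auto


definition DL :: "nat \<Rightarrow> nat list set" where
  "DL n = {L. sorted_wrt (>) L \<and> 0 \<notin> set L \<and> sum_list L = n}"

definition AA :: "nat list \<Rightarrow> nat list" where
  "AA L = map Suc (take (last L) L) @ butlast (drop (last L) L)"

definition BB :: "nat list \<Rightarrow> nat list" where
  "BB L = map (\<lambda>y. y - 1) (take (run L) L) @ drop (run L) L @ [run L]"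

definition Aset :: "nat \<Rightarrow> nat list set" where
  "Aset n = {L \<in> DL n. L \<noteq> [] \<and> last L \<le> run L \<and> last L < length L}"

definition Bset :: "nat \<Rightarrow> nat list set" where
  "Bset n = {L \<in> DL n. L \<noteq> [] \<and> run L < last L \<and> \<not> (run L = length L \<and> last L = Suc (run L))}"

lemma sl_split:
  fixes L :: "nat list"
  assumes "sorted_wrt (>) L"
  shows "sorted_wrt (>) (take k L)" "sorted_wrt (>) (drop k L)"
    "\<And>x y. x \<in> set (take k L) \<Longrightarrow> y \<in> set (drop k L) \<Longrightarrow> y < x"
proof -
  have "sorted_wrt (>) (take k L @ drop k L)" using assms by simp
  then show "sorted_wrt (>) (take k L)" "sorted_wrt (>) (drop k L)"
    "\<And>x y. x \<in> set (take k L) \<Longrightarrow> y \<in> set (drop k L) \<Longrightarrow> y < x"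
    unfolding sorted_wrt_append by blast+
qed

lemma sl_last:
  fixes L :: "nat list"
  assumes "sorted_wrt (>) L" "x \<in> set L"
  shows "last L \<le> x"
proof -
  have ne: "L \<noteq> []" using assms by auto
  obtain L' a where Ld: "L = L' @ [a]" using ne by (cases L rule: rev_cases) auto
  have "\<forall>y\<in>set L'. a < y" using assms(1) unfolding Ld by (simp add: sorted_wrt_append)
  then show ?thesis using assms(2) unfolding Ld by force
qed

lemma sl_hd:
  fixes L :: "nat list"
  assumes "sorted_wrt (>) L" "x \<in> set L"
  shows "x \<le> hd L"
  using assms by (cases L) auto

lemma sum_map_Suc: "sum_list (map Suc xs) = sum_list xs + length xs"
  by (induction xs) auto

lemma sum_map_pred: "0 \<notin> set xs \<Longrightarrow> sum_list (map (\<lambda>y. y - 1) xs) + length xs = sum_list (xs :: nat list)"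
  by (induction xs) auto

lemma A_props:
  assumes LA: "L \<in> Aset n"
  shows "AA L \<in> Bset n \<and> BB (AA L) = L \<and> length (AA L) + 1 = length L"
proof -
  define s where "s = last L"
  from LA have L: "sorted_wrt (>) L" "0 \<notin> set L" "sum_list L = n" "L \<noteq> []"
    and sr: "s \<le> run L" and sl: "s < length L" by (auto simp: Aset_def DL_def s_def)
  have spos: "0 < s" using L(2,4) unfolding s_def by (metis last_in_set gr0I)
  define T where "T = take s L"
  define D where "D = drop s L"
  have LTD: "L = T @ D" by (simp add: T_def D_def)
  have lenT: "length T = s" using sl by (simp add: T_def)
  have Dne: "D \<noteq> []" using sl by (simp add: D_def)
  have lastD: "last D = s" using sl by (simp add: D_def s_def)
  obtain R where DR: "D = R @ [s]" using Dne lastD by (metis append_butlast_last_id)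
  have bD: "butlast D = R" by (simp add: DR)
  have AAe: "AA L = map Suc T @ R" unfolding AA_def s_def[symmetric] T_def[symmetric] D_def[symmetric] bD ..
  have sT: "sorted_wrt (>) T" unfolding T_def by (rule sl_split(1)[OF L(1)])
  have sD: "sorted_wrt (>) D" unfolding D_def by (rule sl_split(2)[OF L(1)])
  have cross: "\<And>x y. x \<in> set T \<Longrightarrow> y \<in> set D \<Longrightarrow> y < x"
    unfolding T_def D_def by (rule sl_split(3)[OF L(1)])
  have sR: "sorted_wrt (>) R" and Rgt: "\<forall>y\<in>set R. s < y"
    using sD unfolding DR by (auto simp: sorted_wrt_append)
  have Tne: "T \<noteq> []" using lenT spos by auto
  have runT: "run T = s" unfolding T_def using run_take[OF spos sr] .
  have crossR: "\<And>x y. x \<in> set T \<Longrightarrow> y \<in> set R \<Longrightarrow> y < x"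
    using cross unfolding DR by (metis Un_iff set_append)
  have sorted_new: "sorted_wrt (>) (AA L)"
    unfolding AAe sorted_wrt_append using sT sR crossR
    by (auto simp: sorted_wrt_map intro: less_SucI)
  have pos_new: "0 \<notin> set (AA L)"
    using L(2) unfolding AAe by (auto simp: LTD DR)
  have sum_new: "sum_list (AA L) = n"
    using L(3) unfolding AAe by (simp add: LTD DR sum_map_Suc lenT)
  have lastT_gt: "s < last T"
    using cross[of "last T" s] Tne by (simp add: DR)
  have run_new: "run (AA L) = s"
  proof -
    have "run (map Suc T @ R) = (if R \<noteq> [] \<and> last (map Suc T) = Suc (hd R) then length (map Suc T) + run R else length (map Suc T))"
      by (rule run_app) (use Tne runT lenT run_map_Suc in auto)
    moreover have "R \<noteq> [] \<Longrightarrow> hd R < last T"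
      using cross[of "last T" "hd R"] Tne by (simp add: DR)
    ultimately show ?thesis unfolding AAe using lenT Tne by (auto simp: last_map)
  qed
  have last_new: "s < last (AA L)"
  proof (cases "R = []")
    case True
    then show ?thesis unfolding AAe using Tne lastT_gt by (simp add: last_map)
  next
    case False
    then show ?thesis unfolding AAe using Rgt by simp
  qed
  have nexc: "\<not> (run (AA L) = length (AA L) \<and> last (AA L) = Suc (run (AA L)))"
  proof (cases "R = []")
    case True
    then show ?thesis unfolding run_new unfolding AAe using Tne lastT_gt by (simp add: last_map)
  next
    case False
    then show ?thesis unfolding run_new unfolding AAe using lenT by simp
  qed
  have inB: "AA L \<in> Bset n"
  proof -
    have "AA L \<noteq> []" using Tne unfolding AAe by simp
    moreover have "run (AA L) < last (AA L)" using run_new last_new by simp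
    ultimately show ?thesis
      using sorted_new pos_new sum_new nexc unfolding Bset_def DL_def by blast
  qed
  have back_eq: "BB (AA L) = L"
  proof -
    have "take s (AA L) = map Suc T" unfolding AAe using lenT by simp
    moreover have "drop s (AA L) = R" unfolding AAe using lenT by simp
    ultimately show ?thesis unfolding BB_def run_new
      by (simp add: LTD DR comp_def)
  qed
  have len: "length (AA L) + 1 = length L"
    unfolding AAe using lenT by (simp add: LTD DR)
  show ?thesis using inB back_eq len by blast
qed


lemma B_props:
  assumes LB: "L \<in> Bset n"
  shows "BB L \<in> Aset n \<and> AA (BB L) = L"
proof -
  define s where "s = last L"
  define r where "r = run L"
  from LB have L: "sorted_wrt (>) L" "0 \<notin> set L" "sum_list L = n" "L \<noteq> []"
    and rs: "r < s" and nexc: "\<not> (r = length L \<and> s = Suc r)"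
    by (auto simp: Bset_def DL_def s_def r_def)
  have rpos: "0 < r" unfolding r_def by (rule run_pos[OF L(4)])
  have rle: "r \<le> length L" unfolding r_def by (rule run_le)
  define T where "T = take r L"
  define D where "D = drop r L"
  have LTD: "L = T @ D" by (simp add: T_def D_def)
  have lenT: "length T = r" using rle by (simp add: T_def)
  have Tne: "T \<noteq> []" using lenT rpos by auto
  have BBe: "BB L = map (\<lambda>y. y - 1) T @ D @ [r]"
    unfolding BB_def r_def[symmetric] T_def[symmetric] D_def[symmetric] ..
  have sT: "sorted_wrt (>) T" unfolding T_def by (rule sl_split(1)[OF L(1)])
  have sD: "sorted_wrt (>) D" unfolding D_def by (rule sl_split(2)[OF L(1)])
  have cross: "\<And>x y. x \<in> set T \<Longrightarrow> y \<in> set D \<Longrightarrow> y < x"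
    unfolding T_def D_def by (rule sl_split(3)[OF L(1)])
  have ge_s: "\<And>x. x \<in> set L \<Longrightarrow> s \<le> x" unfolding s_def using sl_last[OF L(1)] by blast
  have posT: "0 \<notin> set T" and posD: "0 \<notin> set D" using L(2) unfolding LTD by auto
  have runT: "run T = r" unfolding T_def using run_take[OF rpos] r_def by simp
  define a where "a = last T"
  have a_le: "\<And>x. x \<in> set T \<Longrightarrow> a \<le> x" unfolding a_def using sl_last[OF sT] by blast
  have a_ge: "r + 2 \<le> a \<and> (D \<noteq> [] \<longrightarrow> hd D + 2 \<le> a)"
  proof (cases "D = []")
    case True
    then have "r = length L" using rle by (simp add: D_def)
    moreover have "a = s" unfolding a_def s_def LTD using True by simp
    ultimately show ?thesis using rs nexc True by auto
  next
    case False
    then have rl: "r < length L" by (simp add: D_def)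
    have tne: "take r L \<noteq> []" using rpos rl L(4) by simp
    have aL: "a = L ! (r - 1)" unfolding a_def T_def using rpos rl
      by (subst last_conv_nth[OF tne]) simp
    have hD: "hd D = L ! r" unfolding D_def using rl by (simp add: hd_drop_conv_nth)
    have "hd D < a" using cross[of a "hd D"] False Tne unfolding a_def by simp
    moreover have "a \<noteq> Suc (hd D)" unfolding aL hD r_def using run_max[of L] rpos rl r_def by simp
    moreover have "s \<le> hd D" using ge_s[of "hd D"] False unfolding LTD by simp
    ultimately show ?thesis using False rs by auto
  qed
  have crossN: "\<And>x y. x \<in> set T \<Longrightarrow> y \<in> set (D @ [r]) \<Longrightarrow> y < x - 1"
  proof -
    fix x y assume x: "x \<in> set T" and y: "y \<in> set (D @ [r])"
    have ax: "a \<le> x" by (rule a_le[OF x])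
    show "y < x - 1"
    proof (cases "y = r")
      case True
      have "r + 2 \<le> a" using a_ge by blast
      then show ?thesis using ax True by arith
    next
      case False
      then have yD: "y \<in> set D" using y by simp
      then have "y \<le> hd D" by (rule sl_hd[OF sD])
      moreover have "D \<noteq> []" using yD by auto
      moreover have "hd D + 2 \<le> a" using a_ge \<open>D \<noteq> []\<close> by blast
      ultimately show ?thesis using ax by arith
    qed
  qed
  have Dgt: "\<forall>y\<in>set D. r < y" using ge_s rs unfolding LTD by force
  have sorted_new: "sorted_wrt (>) (BB L)"
  proof -
    have "sorted_wrt (>) (map (\<lambda>y. y - 1) T)"
      unfolding sorted_wrt_map
    proof (rule sorted_wrt_mono_rel[OF _ sT])
      fix x y assume "x \<in> set T" "y \<in> set T" "y < x"
      moreover have "y \<noteq> 0" using posT \<open>y \<in> set T\<close> by metis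
      ultimately show "y - 1 < x - 1" by arith
    qed
    moreover have "sorted_wrt (>) (D @ [r])" using sD Dgt by (simp add: sorted_wrt_append)
    ultimately show ?thesis unfolding BBe sorted_wrt_append using crossN by auto
  qed
  have pos_new: "0 \<notin> set (BB L)"
  proof -
    have "\<forall>x\<in>set T. 0 < x - 1"
    proof
      fix x assume "x \<in> set T"
      then have "r < x - 1" using crossN[of x r] by simp
      then show "0 < x - 1" by simp
    qed
    then show ?thesis unfolding BBe using posD rpos by auto
  qed
  have sum_new: "sum_list (BB L) = n"
  proof -
    have "sum_list (map (\<lambda>y. y - 1) T) + r = sum_list T" using sum_map_pred[OF posT] lenT by simp
    then show ?thesis unfolding BBe using L(3) unfolding LTD by simp
  qed
  have run_new: "r \<le> run (BB L)"
  proof -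
    have ne: "map (\<lambda>y. y - 1) T \<noteq> []" using Tne by simp
    have rr: "run (map (\<lambda>y. y - 1) T) = length (map (\<lambda>y. y - 1) T)"
      using run_map_pred[OF posT] runT lenT by simp
    show ?thesis unfolding BBe using run_app[OF ne rr, of "D @ [r]"] lenT by (auto split: if_splits)
  qed
  have inA: "BB L \<in> Aset n"
  proof -
    have "BB L \<noteq> []" unfolding BBe by simp
    moreover have "last (BB L) = r" unfolding BBe by simp
    moreover have "r < length (BB L)" unfolding BBe using lenT by simp
    ultimately show ?thesis using sorted_new pos_new sum_new run_new unfolding Aset_def DL_def by auto
  qed
  have back_eq: "AA (BB L) = L"
  proof -
    have lst: "last (BB L) = r" unfolding BBe by simp
    have "take r (BB L) = map (\<lambda>y. y - 1) T" unfolding BBe using lenT by simp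
    moreover have "drop r (BB L) = D @ [r]" unfolding BBe using lenT by simp
    moreover have "map Suc (map (\<lambda>y. y - 1) T) = T" using posT by (induction T) auto
    ultimately show ?thesis unfolding AA_def lst by (simp add: LTD)
  qed
  show ?thesis using inA back_eq by blast
qed


fun pl :: "nat \<Rightarrow> nat \<Rightarrow> nat list" where
  "pl a 0 = []"
| "pl a (Suc r) = (a + r) # pl a r"

lemma pl_length[simp]: "length (pl a r) = r"
  by (induction r) auto

lemma pl_set: "set (pl a r) = {a..<a+r}"
  by (induction r) auto

lemma pl_run: "run (pl a r) = r"
proof (induction r)
  case (Suc r)
  then show ?case by (cases r) auto
qed simp

lemma pl_sorted: "sorted_wrt (>) (pl a r)"
  by (induction r) (auto simp: pl_set)

lemma pl_last: "0 < r \<Longrightarrow> last (pl a r) = a"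
proof (induction r)
  case (Suc r)
  then show ?case by (cases r) auto
qed simp

lemma pl_sum: "2 * sum_list (pl a r) + r = r * (2 * a + r)"
  by (induction r) (auto simp: algebra_simps)

lemma consec_pl: "L \<noteq> [] \<Longrightarrow> run L = length L \<Longrightarrow> L = pl (last L) (length L)"
proof (induction L rule: run.induct)
  case (3 x y ys)
  then have xy: "x = Suc y" and rr: "run (y # ys) = length (y # ys)" by (auto split: if_splits)
  define a where "a = last (y # ys)"
  have IH: "y # ys = pl a (Suc (length ys))" using 3(1)[OF xy _ rr] unfolding a_def by simp
  then have ya: "y = a + length ys" by simp
  have la: "last (x # y # ys) = a" by (simp add: a_def)
  have "pl a (Suc (Suc (length ys))) = (a + Suc (length ys)) # (y # ys)"
    by (subst pl.simps(2)) (simp only: IH[symmetric])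
  then show ?case unfolding la using xy ya by simp
qed auto

definition E1 :: "nat \<Rightarrow> nat list set" where
  "E1 n = {L \<in> DL n. L \<noteq> [] \<and> run L = length L \<and> last L = length L}"
definition E2 :: "nat \<Rightarrow> nat list set" where
  "E2 n = {L \<in> DL n. L \<noteq> [] \<and> run L = length L \<and> last L = Suc (length L)}"

lemma E1_eq: "E1 n = (\<lambda>r. pl r r) ` {r. 0 < r \<and> 2 * n + r = 3 * r * r}"
proof (intro equalityI subsetI)
  fix L assume L: "L \<in> E1 n"
  then have Lp: "L = pl (length L) (length L)" using consec_pl[of L] by (auto simp: E1_def)
  have "2 * n + length L = 3 * length L * length L"
    using pl_sum[of "length L" "length L"] L Lp by (auto simp: E1_def DL_def)
  moreover have "0 < length L" using L by (auto simp: E1_def)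
  ultimately show "L \<in> (\<lambda>r. pl r r) ` {r. 0 < r \<and> 2 * n + r = 3 * r * r}" using Lp by blast
next
  fix L assume "L \<in> (\<lambda>r. pl r r) ` {r. 0 < r \<and> 2 * n + r = 3 * r * r}"
  then obtain r where r: "0 < r" "2 * n + r = 3 * r * r" and Lr: "L = pl r r" by blast
  have "2 * sum_list L = 2 * n" using pl_sum[of r r] r Lr by (simp add: algebra_simps)
  then have "sum_list L = n" by simp
  moreover have "0 \<notin> set L" using r unfolding Lr pl_set by auto
  moreover have "L \<noteq> []" using r Lr by (cases r) auto
  ultimately show "L \<in> E1 n" unfolding E1_def DL_def using Lr r pl_sorted pl_run pl_last by auto
qed

lemma E2_eq: "E2 n = (\<lambda>r. pl (Suc r) r) ` {r. 0 < r \<and> 2 * n = 3 * r * r + r}"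
proof (intro equalityI subsetI)
  fix L assume L: "L \<in> E2 n"
  then have Lp: "L = pl (Suc (length L)) (length L)" using consec_pl[of L] by (auto simp: E2_def)
  have "2 * n = 3 * length L * length L + length L"
    using pl_sum[of "Suc (length L)" "length L"] L Lp by (auto simp: E2_def DL_def algebra_simps)
  moreover have "0 < length L" using L by (auto simp: E2_def)
  ultimately show "L \<in> (\<lambda>r. pl (Suc r) r) ` {r. 0 < r \<and> 2 * n = 3 * r * r + r}" using Lp by blast
next
  fix L assume "L \<in> (\<lambda>r. pl (Suc r) r) ` {r. 0 < r \<and> 2 * n = 3 * r * r + r}"
  then obtain r where r: "0 < r" "2 * n = 3 * r * r + r" and Lr: "L = pl (Suc r) r" by blast
  have "2 * sum_list L = 2 * n" using pl_sum[of "Suc r" r] r Lr by (simp add: algebra_simps)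
  then have "sum_list L = n" by simp
  moreover have "0 \<notin> set L" using r unfolding Lr pl_set by auto
  moreover have "L \<noteq> []" using r Lr by (cases r) auto
  ultimately show "L \<in> E2 n" unfolding E2_def DL_def using Lr r pl_sorted pl_run pl_last by auto
qed

lemma pent_inj:
  assumes h: "(m::int) * (3*m - 1) = m' * (3*m' - 1)" shows "m = m'"
proof -
  have "(m - m') * (3*(m+m') - 1) = m*(3*m-1) - m'*(3*m'-1)" by (simp add: algebra_simps)
  then have "(m - m') * (3*(m+m') - 1) = 0" using h by simp
  moreover have "3*(m+m') - 1 \<noteq> 0" by presburger
  ultimately show ?thesis by simp
qed

lemma pent_nonneg: "0 \<le> (m::int) * (3*m - 1)"
  by (cases "m \<ge> 1") (auto intro: mult_nonneg_nonneg mult_nonpos_nonpos)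

lemma pent_coeff_val:
  assumes "2*q = m*(3*m-1)" shows "pent_coeff q = (-1) ^ nat \<bar>m\<bar>"
proof -
  have "0 \<le> q" using assms pent_nonneg[of m] by simp
  moreover have th: "(THE m::int. 2 * q = m * (3 * m - 1)) = m"
  proof (rule the_equality)
    show "2*q = m*(3*m-1)" by (rule assms)
  next
    fix m' assume "2*q = m'*(3*m'-1)"
    then show "m' = m" using assms pent_inj[of m' m] by simp
  qed
  moreover have "\<exists>m::int. 2 * q = m * (3 * m - 1)" using assms by blast
  ultimately show ?thesis unfolding pent_coeff_def by (simp only: th if_True simp_thms)
qed

lemma list_len_le: "0 \<notin> set L \<Longrightarrow> length L \<le> sum_list (L::nat list)"
  by (induction L) (auto simp: Suc_le_eq)

lemma list_mem_le: "x \<in> set L \<Longrightarrow> x \<le> sum_list (L::nat list)"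
  by (induction L) auto

lemma finite_DL: "finite (DL n)"
proof -
  have "DL n \<subseteq> {xs. set xs \<subseteq> {1..n} \<and> length xs \<le> n}"
  proof
    fix L assume "L \<in> DL n"
    then have L: "0 \<notin> set L" "sum_list L = n" by (auto simp: DL_def)
    have "set L \<subseteq> {1..n}"
    proof
      fix x assume "x \<in> set L"
      then have "x \<noteq> 0" "x \<le> n" using L list_mem_le[of x L] by (metis, simp)
      then show "x \<in> {1..n}" by simp
    qed
    then show "L \<in> {xs. set xs \<subseteq> {1..n} \<and> length xs \<le> n}" using L list_len_le[of L] by auto
  qed
  then show ?thesis by (rule finite_subset) (intro finite_lists_length_le, simp)
qed


definition ee :: "nat \<Rightarrow> complex" where
  "ee n = (\<Sum>L\<in>DL n. (-1) ^ length L)"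

lemma DL_split:
  assumes "0 < n"
  shows "DL n = ((Aset n \<union> Bset n) \<union> E1 n) \<union> E2 n"
    "Aset n \<inter> Bset n = {}" "(Aset n \<union> Bset n) \<inter> E1 n = {}" "((Aset n \<union> Bset n) \<union> E1 n) \<inter> E2 n = {}"
proof -
  show "DL n = ((Aset n \<union> Bset n) \<union> E1 n) \<union> E2 n"
  proof (intro equalityI subsetI)
    fix L assume L: "L \<in> DL n"
    then have ne: "L \<noteq> []" using assms by (auto simp: DL_def)
    have rl: "run L \<le> length L" by (rule run_le)
    show "L \<in> ((Aset n \<union> Bset n) \<union> E1 n) \<union> E2 n"
    proof (cases "last L \<le> run L")
      case True
      then show ?thesis using L ne rl
        by (cases "last L < length L") (auto simp: Aset_def E1_def)
    next
      case False
      then show ?thesis using L ne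
        by (cases "run L = length L \<and> last L = Suc (run L)") (auto simp: Bset_def E2_def)
    qed
  qed (auto simp: Aset_def Bset_def E1_def E2_def)
qed (auto simp: Aset_def Bset_def E1_def E2_def)

lemma fin_sets: "finite (Aset n)" "finite (Bset n)" "finite (E1 n)" "finite (E2 n)"
  by (rule finite_subset[OF _ finite_DL[of n]], auto simp: Aset_def Bset_def E1_def E2_def)+

definition R1 :: "nat \<Rightarrow> nat set" where "R1 n = {r. 0 < r \<and> 2 * n + r = 3 * r * r}"
definition R2 :: "nat \<Rightarrow> nat set" where "R2 n = {r. 0 < r \<and> 2 * n = 3 * r * r + r}"

lemma ee_pos:
  assumes "0 < n"
  shows "ee n = (\<Sum>r\<in>R1 n. (-1) ^ r) + (\<Sum>r\<in>R2 n. (-1) ^ r)"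
proof -
  let ?f = "\<lambda>L::nat list. (-1::complex) ^ length L"
  note sp = DL_split[OF assms]
  have "ee n = sum ?f (Aset n) + sum ?f (Bset n) + sum ?f (E1 n) + sum ?f (E2 n)"
    unfolding ee_def sp(1)
    by (simp add: sum.union_disjoint fin_sets sp(2-4))
  moreover have "sum ?f (Bset n) = - sum ?f (Aset n)"
  proof -
    have "sum (\<lambda>L. - ?f L) (Aset n) = sum ?f (Bset n)"
    proof (rule sum.reindex_bij_witness[of _ BB AA])
      fix L assume "L \<in> Aset n"
      note ap = A_props[OF this]
      then show "BB (AA L) = L" "AA L \<in> Bset n" by auto
      from ap have "length L = Suc (length (AA L))" by simp
      then show "?f (AA L) = - ?f L" by simp
    next
      fix L assume "L \<in> Bset n"
      from B_props[OF this] show "AA (BB L) = L" "BB L \<in> Aset n" by auto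
    qed
    then show ?thesis by (simp add: sum_negf)
  qed
  moreover have "sum ?f (E1 n) = (\<Sum>r\<in>R1 n. (-1) ^ r)"
    unfolding E1_eq R1_def by (subst sum.reindex) (auto simp: inj_on_def dest: arg_cong[of _ _ length])
  moreover have "sum ?f (E2 n) = (\<Sum>r\<in>R2 n. (-1) ^ r)"
    unfolding E2_eq R2_def by (subst sum.reindex) (auto simp: inj_on_def dest: arg_cong[of _ _ length])
  ultimately show ?thesis by simp
qed


lemma R1_int: "r \<in> R1 n \<Longrightarrow> 2 * int n = int r * (3 * int r - 1)"
proof -
  assume r: "r \<in> R1 n"
  then have "int (2 * n + r) = int (3 * r * r)" by (simp add: R1_def)
  then show ?thesis by (simp add: algebra_simps)
qed

lemma R2_int: "r \<in> R2 n \<Longrightarrow> 2 * int n = (- int r) * (3 * (- int r) - 1)"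
proof -
  assume r: "r \<in> R2 n"
  then have "int (2 * n) = int (3 * r * r + r)" by (simp add: R2_def)
  then show ?thesis by (simp add: algebra_simps)
qed

lemma pent_coeff0: "pent_coeff 0 = 1"
  using pent_coeff_val[of 0 0] by simp

lemma ee_pent: "ee n = pent_coeff (int n)"
proof (cases "n = 0")
  case True
  have "L \<in> DL 0 \<longleftrightarrow> L = []" for L by (cases L) (auto simp: DL_def)
  then have "DL 0 = {[]}" by blast
  then show ?thesis using True by (simp add: ee_def pent_coeff0)
next
  case False
  then have n0: "0 < n" by simp
  show ?thesis
  proof (cases "\<exists>r. r \<in> R1 n")
    case True
    then obtain r where r: "r \<in> R1 n" by blast
    have e: "2 * int n = int r * (3 * int r - 1)" by (rule R1_int[OF r])
    have "R1 n = {r}"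
    proof (intro equalityI subsetI)
      fix r' assume "r' \<in> R1 n"
      from R1_int[OF this] e have "int r' = int r" using pent_inj by metis
      then show "r' \<in> {r}" by simp
    qed (use r in simp)
    moreover have "R2 n = {}"
    proof (intro equalityI subsetI)
      fix r' assume r': "r' \<in> R2 n"
      from R2_int[OF this] e have "- int r' = int r" using pent_inj by metis
      moreover have "0 < r'" "0 < r" using r r' by (auto simp: R1_def R2_def)
      ultimately show "r' \<in> {}" by simp
    qed simp
    ultimately have "ee n = (-1) ^ r" using ee_pos[OF n0] by simp
    moreover have "pent_coeff (int n) = (-1) ^ nat \<bar>int r\<bar>" by (rule pent_coeff_val[OF e])
    ultimately show ?thesis by simp
  next
    case nR1: False
    show ?thesis
    proof (cases "\<exists>r. r \<in> R2 n")
      case True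
      then obtain r where r: "r \<in> R2 n" by blast
      have e: "2 * int n = (- int r) * (3 * (- int r) - 1)" by (rule R2_int[OF r])
      have "R2 n = {r}"
      proof (intro equalityI subsetI)
        fix r' assume "r' \<in> R2 n"
        from R2_int[OF this] e have "- int r' = - int r" using pent_inj by metis
        then show "r' \<in> {r}" by simp
      qed (use r in simp)
      moreover have "R1 n = {}" using nR1 by blast
      ultimately have "ee n = (-1) ^ r" using ee_pos[OF n0] by simp
      moreover have "pent_coeff (int n) = (-1) ^ nat \<bar>- int r\<bar>" by (rule pent_coeff_val[OF e])
      ultimately show ?thesis by simp
    next
      case False
      then have "R1 n = {}" "R2 n = {}" using nR1 by blast+
      then have "ee n = 0" using ee_pos[OF n0] by simp
      moreover have "\<not> (\<exists>m::int. 2 * int n = m * (3 * m - 1))"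
      proof
        assume "\<exists>m::int. 2 * int n = m * (3 * m - 1)"
        then obtain m :: int where m: "2 * int n = m * (3 * m - 1)" by blast
        consider "m = 0" | "0 < m" | "m < 0" by linarith
        then show False
        proof cases
          case 1 then show False using m n0 by simp
        next
          case 2
          then have "int (2 * n + nat m) = int (3 * nat m * nat m)" using m by (simp add: algebra_simps)
          then have "nat m \<in> R1 n" using 2 unfolding R1_def by (simp only: of_nat_eq_iff) simp
          then show False using nR1 by blast
        next
          case 3
          then have "int (2 * n) = int (3 * nat (-m) * nat (-m) + nat (-m))" using m by (simp add: algebra_simps)
          then have "nat (-m) \<in> R2 n" using 3 unfolding R2_def by (simp only: of_nat_eq_iff) simp
          then show False using False by blast
        qed
      qed
      ultimately show ?thesis by (simp add: pent_coeff_def)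
    qed
  qed
qed



abbreviation pp :: "nat \<Rightarrow> complex" where "pp n \<equiv> of_nat (partition_count n)"

definition Par :: "nat \<Rightarrow> nat multiset set" where
  "Par n = {M. (\<forall>x\<in>#M. 0 < x) \<and> sum_mset M = n}"

lemma mset_size_le: "(\<forall>x\<in>#M. 0 < x) \<Longrightarrow> size M \<le> sum_mset (M::nat multiset)"
  by (induction M) auto

lemma mset_mem_le: "x \<in># M \<Longrightarrow> x \<le> sum_mset (M::nat multiset)"
  by (induction M) auto

lemma finite_Par: "finite (Par n)"
proof -
  have "Par n \<subseteq> mset ` {xs. set xs \<subseteq> {1..n} \<and> length xs \<le> n}"
  proof
    fix M assume M: "M \<in> Par n"
    obtain xs where xs: "mset xs = M" using ex_mset by blast
    have "set xs \<subseteq> {1..n}" using M mset_mem_le[of _ M] unfolding Par_def xs[symmetric]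
      by (auto simp: Suc_le_eq)
    moreover have "length xs \<le> n" using M mset_size_le[of M] unfolding Par_def xs[symmetric] by auto
    ultimately show "M \<in> mset ` {xs. set xs \<subseteq> {1..n} \<and> length xs \<le> n}" using xs by blast
  qed
  then show ?thesis by (rule finite_subset) (intro finite_imageI finite_lists_length_le, simp)
qed

lemma pp_Par: "pp n = (\<Sum>Q\<in>Par n. 1)"
  by (simp add: partition_count_def Par_def)

definition XX :: "nat \<Rightarrow> (nat list \<times> nat multiset) set" where
  "XX n = {(L,Q). sorted_wrt (>) L \<and> 0 \<notin> set L \<and> (\<forall>x\<in>#Q. 0 < x) \<and> sum_list L + sum_mset Q = n}"

lemma conv_XX:
  "(\<Sum>l=0..n. ee l * pp (n - l)) = (\<Sum>(L,Q)\<in>XX n. (-1::complex) ^ length L)"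
proof -
  have "(\<Sum>l=0..n. ee l * pp (n - l)) = (\<Sum>l=0..n. \<Sum>L\<in>DL l. \<Sum>Q\<in>Par (n - l). (-1::complex) ^ length L)"
    by (simp only: ee_def pp_Par sum_product mult_1_right)
  also have "\<dots> = (\<Sum>(l,L)\<in>Sigma {0..n} DL. \<Sum>Q\<in>Par (n - l). (-1::complex) ^ length L)"
    by (subst sum.Sigma) (auto simp: finite_DL)
  also have "\<dots> = (\<Sum>((l,L),Q)\<in>Sigma (Sigma {0..n} DL) (\<lambda>(l,L). Par (n - l)). (-1::complex) ^ length L)"
    using sum.Sigma[of "Sigma {0..n} DL" "\<lambda>(l,L). Par (n-l)" "\<lambda>(l,L) Q. (-1::complex)^length L"]
    by (simp add: finite_DL finite_Par split_def)
  also have "\<dots> = (\<Sum>(L,Q)\<in>XX n. (-1::complex) ^ length L)"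
    by (rule sum.reindex_bij_witness[of _ "\<lambda>(L,Q). ((sum_list L, L), Q)" "\<lambda>((l,L),Q). (L,Q)"])
       (auto simp: XX_def DL_def Par_def)
  finally show ?thesis .
qed

lemma invol_sum_zero:
  assumes "\<And>x. x \<in> X \<Longrightarrow> f x \<in> X" "\<And>x. x \<in> X \<Longrightarrow> f (f x) = x"
    "\<And>x. x \<in> X \<Longrightarrow> g (f x) = - (g x :: complex)"
  shows "sum g X = 0"
proof -
  have "sum g X = sum (\<lambda>x. g (f x)) X"
    by (rule sum.reindex_bij_witness[of _ f f]) (use assms in auto)
  also have "\<dots> = - sum g X" using assms(3) by (simp add: sum_negf)
  finally show ?thesis by simp
qed

lemma last_min:
  fixes L :: "nat list"
  assumes "sorted_wrt (>) L" "L \<noteq> []"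
  shows "\<forall>y\<in>set (butlast L). last L < y" "last L \<notin> set (butlast L)"
proof -
  have "sorted_wrt (>) (butlast L @ [last L])" using assms by simp
  then show "\<forall>y\<in>set (butlast L). last L < y" by (simp add: sorted_wrt_append)
  then show "last L \<notin> set (butlast L)"
  proof (intro notI)
    assume h: "\<forall>y\<in>set (butlast L). last L < y" and "last L \<in> set (butlast L)"
    then have "last L < last L" by (rule bspec)
    then show False by simp
  qed
qed

definition ff :: "nat list \<times> nat multiset \<Rightarrow> nat list \<times> nat multiset" where
  "ff LQ = (let m = Min (set (fst LQ) \<union> set_mset (snd LQ)) in
     if m \<in> set (fst LQ) then (butlast (fst LQ), add_mset m (snd LQ))
     else (fst LQ @ [m], snd LQ - {#m#}))"

lemma ff_props:
  assumes "(L,Q) \<in> XX n" "n \<noteq> 0"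
  shows "ff (L,Q) \<in> XX n \<and> ff (ff (L,Q)) = (L,Q) \<and> length (fst (ff (L,Q))) + 1 = length L \<or>
         ff (L,Q) \<in> XX n \<and> ff (ff (L,Q)) = (L,Q) \<and> length (fst (ff (L,Q))) = length L + 1"
proof -
  define S where "S = set L \<union> set_mset Q"
  define m where "m = Min S"
  from assms have L: "sorted_wrt (>) L" "0 \<notin> set L" and Q: "\<forall>x\<in>#Q. 0 < x"
    and sum: "sum_list L + sum_mset Q = n" by (auto simp: XX_def)
  have fin: "finite S" by (simp add: S_def)
  have ne: "S \<noteq> {}" using sum assms(2) by (auto simp: S_def)
  have mS: "m \<in> S" using fin ne by (simp add: m_def)
  have mle: "\<And>y. y \<in> S \<Longrightarrow> m \<le> y" using fin by (simp add: m_def)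
  show ?thesis
  proof (cases "m \<in> set L")
    case True
    then have Lne: "L \<noteq> []" by auto
    obtain L' a where Ld: "L = L' @ [a]" using Lne by (cases L rule: rev_cases) auto
    have gt: "\<forall>y\<in>set L'. a < y" using L(1) unfolding Ld by (simp add: sorted_wrt_append)
    have "a \<in> S" unfolding S_def Ld by simp
    then have "m \<le> a" by (rule mle)
    moreover have "m = a \<or> m \<in> set L'" using True unfolding Ld by auto
    ultimately have am: "a = m" using gt by force
    have f0: "ff (L,Q) = (butlast L, add_mset m Q)"
      using True by (simp add: ff_def Let_def S_def[symmetric] m_def[symmetric])
    have "butlast L = L'" by (simp add: Ld)
    then have f1: "ff (L,Q) = (L', add_mset m Q)" using f0 by simp
    have X1: "(L', add_mset m Q) \<in> XX n"
    proof -
      have "sorted_wrt (>) L'" using L(1) unfolding Ld by (simp add: sorted_wrt_append)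
      moreover have "0 \<notin> set L'" using L(2) unfolding Ld by simp
      moreover have "0 < m" using True L(2) gr0I by metis
      moreover have "sum_list L' + m = sum_list L" unfolding Ld am by simp
      ultimately show ?thesis using Q sum by (auto simp: XX_def)
    qed
    have S2: "set L' \<union> set_mset (add_mset m Q) = S"
      unfolding S_def Ld am by auto
    have mnot: "m \<notin> set L'" using gt am by auto
    have mm: "Min (set L' \<union> set_mset (add_mset m Q)) = m" using S2 by (simp only: m_def)
    have f2: "ff (L', add_mset m Q) = (L, Q)"
      unfolding ff_def Let_def fst_conv snd_conv mm using mnot by (simp add: Ld am)
    show ?thesis using f1 f2 X1 by (simp add: Ld)
  next
    case False
    then have mQ: "m \<in># Q" using mS by (auto simp: S_def)
    have f1: "ff (L,Q) = (L @ [m], Q - {#m#})"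
      using False by (simp add: ff_def Let_def S_def[symmetric] m_def[symmetric])
    have lt: "\<forall>y\<in>set L. m < y"
    proof
      fix y assume y: "y \<in> set L"
      then have "m \<le> y" by (intro mle) (simp add: S_def)
      moreover have "y \<noteq> m" using y False by auto
      ultimately show "m < y" by simp
    qed
    have X1: "(L @ [m], Q - {#m#}) \<in> XX n"
    proof -
      have "sorted_wrt (>) (L @ [m])" using L(1) lt by (simp add: sorted_wrt_append)
      moreover have "0 < m" using mQ Q by auto
      moreover have "sum_mset Q = m + sum_mset (Q - {#m#})" using mQ by (rule sum_mset.remove)
      moreover have "\<forall>x\<in>#Q - {#m#}. 0 < x" using Q by (auto dest: in_diffD)
      moreover have "0 \<notin> set (L @ [m])" using L(2) \<open>0 < m\<close> by auto
      moreover have "sum_list (L @ [m]) = sum_list L + m" by simp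
      ultimately show ?thesis using sum unfolding XX_def by auto
    qed
    have S2: "Min (set (L @ [m]) \<union> set_mset (Q - {#m#})) = m"
    proof (rule Min_eqI)
      show "finite (set (L @ [m]) \<union> set_mset (Q - {#m#}))" by simp
      show "m \<in> set (L @ [m]) \<union> set_mset (Q - {#m#})" by simp
      fix y assume "y \<in> set (L @ [m]) \<union> set_mset (Q - {#m#})"
      then have "y \<in> S \<or> y = m" unfolding S_def by (auto dest: in_diffD)
      then show "m \<le> y" using mle by auto
    qed
    have f2: "ff (L @ [m], Q - {#m#}) = (L, Q)"
      unfolding ff_def Let_def fst_conv snd_conv S2 using mQ by simp
    show ?thesis using f1 f2 X1 by simp
  qed
qed

lemma conv_zero:
  assumes "n \<noteq> 0"
  shows "(\<Sum>(L,Q)\<in>XX n. (-1::complex) ^ length L) = 0"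
proof (rule invol_sum_zero[of _ ff])
  fix x assume x: "x \<in> XX n"
  obtain L Q where x': "x = (L,Q)" by fastforce
  from ff_props[OF x[unfolded x'] assms] show "ff x \<in> XX n" "ff (ff x) = x"
    unfolding x' by auto
  obtain a b where ab: "ff (L,Q) = (a,b)" by fastforce
  from ff_props[OF x[unfolded x'] assms] ab
  have "length L = Suc (length a) \<or> length a = Suc (length L)" by auto
  then show "(case ff x of (L, Q) \<Rightarrow> (-1::complex) ^ length L) = - (case x of (L, Q) \<Rightarrow> (-1) ^ length L)"
    unfolding x' ab by auto
qed

lemma ee0: "ee 0 = 1"
proof -
  have "L \<in> DL 0 \<longleftrightarrow> L = []" for L by (cases L) (auto simp: DL_def)
  then have "DL 0 = {[]}" by blast
  then show ?thesis by (simp add: ee_def)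
qed

lemma conv: "(\<Sum>l=0..n. ee l * pp (n - l)) = (if n = 0 then 1 else 0)"
proof (cases "n = 0")
  case True
  have "partition_count 0 = 1"
  proof -
    have "{M :: nat multiset. (\<forall>x\<in>#M. 0 < x) \<and> sum_mset M = 0} = {{#}}"
      using multiset_nonemptyE by fastforce
    then show ?thesis unfolding partition_count_def by simp
  qed
  then show ?thesis using True by (simp add: ee0)
qed (simp add: conv_XX conv_zero)


lemma recur: "(\<Sum>l=0..n. pent_coeff (int l) * pp (n - l)) = (if n = 0 then 1 else 0)"
  using conv[of n] by (simp add: ee_pent)


lemma pent_neg: "q < 0 \<Longrightarrow> pent_coeff q = 0"
  by (simp add: pent_coeff_def)

lemma mult_entry:
  assumes "i < k" "j < k"
  shows "(mat k k f * mat k k g) $$ (i,j) = (\<Sum>l<k. f (i,l) * g (l,j))"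
  using assms by (simp add: scalar_prod_def atLeast0LessThan)

lemma L1:
  assumes "i < k"
  shows "(\<Sum>l<k. (if l \<le> i then pp (i - l) else 0) * pent_coeff (int l - int c))
         = (if i = c then 1 else 0)"
proof -
  have "(\<Sum>l<k. (if l \<le> i then pp (i - l) else 0) * pent_coeff (int l - int c))
      = (\<Sum>l\<in>{0..i}. pp (i - l) * pent_coeff (int l - int c))"
    using assms by (intro sum.mono_neutral_cong_right) auto
  also have "\<dots> = (if i = c then 1 else 0)"
  proof (cases "c \<le> i")
    case True
    have "(\<Sum>l\<in>{0..i}. pp (i - l) * pent_coeff (int l - int c))
        = (\<Sum>l\<in>{c..i}. pp (i - l) * pent_coeff (int l - int c))"
      by (intro sum.mono_neutral_cong_right) (auto simp: pent_neg)
    also have "\<dots> = (\<Sum>u\<in>{0..i-c}. pp (i - c - u) * pent_coeff (int u))"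
      using True
      by (intro sum.reindex_bij_witness[of _ "\<lambda>u. u + c" "\<lambda>l. l - c"]) auto
    also have "\<dots> = (\<Sum>u=0..i-c. pent_coeff (int u) * pp (i - c - u))"
      by (simp add: mult.commute)
    also have "\<dots> = (if i - c = 0 then 1 else 0)" by (rule recur)
    also have "\<dots> = (if i = c then 1 else 0)" using True by simp
    finally show ?thesis .
  next
    case False
    then show ?thesis by (auto intro!: sum.neutral simp: pent_neg)
  qed
  finally show ?thesis .
qed

lemma L2:
  assumes "i < k"
  shows "(\<Sum>l<k. (if l \<le> i then pp (i - l) else 0) * pent_coeff (int l + 1))
         = - pp (i + 1)"
proof -
  have "(\<Sum>l<k. (if l \<le> i then pp (i - l) else 0) * pent_coeff (int l + 1))
      = (\<Sum>l\<in>{0..i}. pp (i - l) * pent_coeff (int l + 1))"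
    using assms by (intro sum.mono_neutral_cong_right) auto
  also have "\<dots> = (\<Sum>u\<in>{1..i+1}. pp (i + 1 - u) * pent_coeff (int u))"
    by (intro sum.reindex_bij_witness[of _ "\<lambda>u. u - 1" "\<lambda>l. l + 1"]) (auto simp: add.commute)
  also have "\<dots> = (\<Sum>u=0..i+1. pent_coeff (int u) * pp (i + 1 - u)) - pp (i+1) * pent_coeff 0"
    by (simp add: sum.atLeast_Suc_atMost mult.commute)
  also have "(\<Sum>u=0..i+1. pent_coeff (int u) * pp (i + 1 - u)) = (if i + 1 = 0 then 1 else 0)"
    by (rule recur)
  also have "pent_coeff 0 = 1" using pent_coeff_val[of 0 0] by simp
  finally show ?thesis by simp
qed


lemma pc0: "partition_count 0 = 1"
proof -
  have "{M :: nat multiset. (\<forall>x\<in>#M. 0 < x) \<and> sum_mset M = 0} = {{#}}"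
    using multiset_nonemptyE by fastforce
  then show ?thesis unfolding partition_count_def by simp
qed

lemma A_entry:
  assumes "i < k" "j < k"
  shows "(mat k k (\<lambda>(i,j). if j \<le> i then pp (i - j) else 0) *
          mat k k (\<lambda>(i, j). pent_coeff (int i - int j) - x * pent_coeff (int i - int j + 1))) $$ (i,j)
   = (if j = 0 then (if i = 0 then 1 else 0) + x * pp (i+1)
      else (if i = j then 1 else 0) - x * (if i + 1 = j then 1 else 0))"
proof -
  have "(mat k k (\<lambda>(i,j). if j \<le> i then pp (i - j) else 0) *
          mat k k (\<lambda>(i, j). pent_coeff (int i - int j) - x * pent_coeff (int i - int j + 1))) $$ (i,j)
    = (\<Sum>l<k. (if l \<le> i then pp (i - l) else 0) * pent_coeff (int l - int j))
      - x * (\<Sum>l<k. (if l \<le> i then pp (i - l) else 0) * pent_coeff (int l - int j + 1))"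
    unfolding mult_entry[OF assms]
    by (simp add: right_diff_distrib sum_subtractf sum_distrib_left mult_ac)
  also have "\<dots> = (if j = 0 then (if i = 0 then 1 else 0) + x * pp (i+1)
      else (if i = j then 1 else 0) - x * (if i + 1 = j then 1 else 0))"
  proof (cases "j = 0")
    case True
    then show ?thesis using L1[OF assms(1), of 0] L2[OF assms(1)] by simp
  next
    case False
    then have e: "\<And>l. int l - int j + 1 = int l - int (j - 1)" by auto
    show ?thesis using False L1[OF assms(1), of j] L1[OF assms(1), of "j - 1"]
      unfolding e by auto
  qed
  finally show ?thesis .
qed

lemma T_entry:
  assumes "i < k" "j < k" and 
    A: "\<And>t. t < k \<Longrightarrow> a t = (if j = 0 then (if t = 0 then 1 else 0) + x * pp (t+1)
      else (if t = j then 1 else 0) - x * (if t + 1 = j then 1 else 0))"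
  shows "(\<Sum>t<k. (if i \<le> t then x ^ (t - i) else 0) * a t) =
    (if j = 0 then (if i = 0 then 1 + (\<Sum>t<k. x^(t+1) * pp (t+1)) else (\<Sum>t<k. (if i \<le> t then x ^ (t - i) else 0) * a t))
     else if i \<le> j then (if i = j then 1 else 0) else (\<Sum>t<k. (if i \<le> t then x ^ (t - i) else 0) * a t))"
proof (cases "j = 0")
  case True
  show ?thesis
  proof (cases "i = 0")
    case i0: True
    have "(\<Sum>t<k. (if i \<le> t then x ^ (t - i) else 0) * a t)
        = (\<Sum>t<k. (if t = 0 then 1 else 0) + x^(t+1) * pp (t+1))"
      using A True i0 by (intro sum.cong) (auto simp: algebra_simps)
    also have "\<dots> = 1 + (\<Sum>t<k. x^(t+1) * pp (t+1))"
      using assms(1) by (simp add: sum.distrib)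
    finally show ?thesis using True i0 by simp
  qed (use True in simp)
next
  case False
  show ?thesis
  proof (cases "i \<le> j")
    case True
    have "(\<Sum>t<k. (if i \<le> t then x ^ (t - i) else 0) * a t)
        = (\<Sum>t<k. (if t = j then (if i \<le> t then x ^ (t - i) else 0) else 0)
            - x * (if t = j - 1 then (if i \<le> t then x ^ (t - i) else 0) else 0))"
    proof (rule sum.cong)
      fix t assume "t \<in> {..<k}"
      then show "(if i \<le> t then x ^ (t - i) else 0) * a t =
        (if t = j then (if i \<le> t then x ^ (t - i) else 0) else 0)
            - x * (if t = j - 1 then (if i \<le> t then x ^ (t - i) else 0) else 0)"
        using A[of t] False by auto
    qed simp
    also have "\<dots> = (\<Sum>t<k. (if t = j then (if i \<le> t then x ^ (t - i) else 0) else 0))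
            - x * (\<Sum>t<k. (if t = j - 1 then (if i \<le> t then x ^ (t - i) else 0) else 0))"
      by (simp only: sum_subtractf sum_distrib_left)
    also have "\<dots> = (if i \<le> j then x ^ (j - i) else 0) - x * (if i \<le> j - 1 then x ^ (j - 1 - i) else 0)"
    proof -
      have "(\<Sum>t<k. (if t = j then (if i \<le> t then x ^ (t - i) else 0) else 0))
         = (if i \<le> j then x ^ (j - i) else 0)" using assms(2) by (subst sum.delta) auto
      moreover have "(\<Sum>t<k. (if t = j - 1 then (if i \<le> t then x ^ (t - i) else 0) else 0))
         = (if i \<le> j - 1 then x ^ (j - 1 - i) else 0)" using assms(2) by (subst sum.delta) auto
      ultimately show ?thesis by simp
    qed
    also have "\<dots> = (if i = j then 1 else 0)"
    proof (cases "i = j")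
      case False
      with True have "j - i = Suc (j - 1 - i)" by auto
      then show ?thesis using True False by simp
    qed (use \<open>j \<noteq> 0\<close> in simp)
    finally show ?thesis using False True by simp
  qed (use False in simp)
qed


lemma sum_shift_k:
  assumes "1 \<le> k"
  shows "(\<Sum>n=0..k. pp n * x ^ n) = 1 + (\<Sum>t<k. x^(t+1) * pp (t+1))"
proof -
  obtain m where k: "k = Suc m" using assms by (cases k) auto
  have "(\<Sum>n=0..k. pp n * x ^ n) = (\<Sum>n\<le>Suc m. pp n * x ^ n)" by (simp add: k atLeast0AtMost)
  also have "\<dots> = pp 0 * x^0 + (\<Sum>n\<le>m. pp (Suc n) * x ^ Suc n)" by (rule sum.atMost_Suc_shift)
  also have "(\<Sum>n\<le>m. pp (Suc n) * x ^ Suc n) = (\<Sum>t<k. x^(t+1) * pp (t+1))"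
    by (simp add: k lessThan_Suc_atMost mult.commute)
  finally show ?thesis by (simp add: pc0)
qed

theorem mainTheorem9:
  fixes k :: nat and x :: complex
  assumes "1 \<le> k"
  shows "(\<Sum>n=0..k. of_nat (partition_count n) * x ^ n) =
         det (mat k k (\<lambda>(i, j). pent_coeff (int i - int j) - x * pent_coeff (int i - int j + 1)))"
proof -
  define M where "M = mat k k (\<lambda>(i, j). pent_coeff (int i - int j) - x * pent_coeff (int i - int j + 1))"
  define P where "P = mat k k (\<lambda>(i,j). if j \<le> i then pp (i - j) else 0)"
  define U where "U = mat k k (\<lambda>(i,j). if i \<le> j then x ^ (j - i) else (0::complex))"
  define a where "a = (\<lambda>t j. if j = 0 then (if t = 0 then 1 else 0) + x * pp (t+1)
      else (if t = j then 1 else 0) - x * (if t + 1 = j then (1::complex) else 0))"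
  define T where "T = (\<lambda>i j. \<Sum>t<k. (if i \<le> t then x ^ (t - i) else 0) * a t j)"
  have PMe: "(P * M) $$ (i,j) = a i j" if "i < k" "j < k" for i j
    by (simp only: P_def M_def a_def A_entry[OF that])
  have PM: "P * M = mat k k (\<lambda>(t,j). a t j)"
    by (rule eq_matI) (auto simp: PMe simp del: index_mult_mat, auto simp: P_def M_def)
  have UPM: "U * (P * M) = mat k k (\<lambda>(i,j). T i j)"
    unfolding PM by (rule eq_matI) (auto simp: U_def T_def scalar_prod_def atLeast0LessThan)
  have Te: "T i j = (if j = 0 then (if i = 0 then 1 + (\<Sum>t<k. x^(t+1) * pp (t+1)) else T i j)
     else if i \<le> j then (if i = j then 1 else 0) else T i j)" if "i < k" "j < k" for i j
    unfolding T_def by (rule T_entry[OF that]) (simp add: a_def)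
  have detU: "det U = 1"
  proof -
    have "det U = prod_list (diag_mat U)"
      by (rule det_upper_triangular) (auto simp: U_def upper_triangular_def)
    also have "\<dots> = 1" by (simp add: prod_list_diag_prod U_def)
    finally show ?thesis .
  qed
  have detP: "det P = 1"
  proof -
    have "det P = prod_list (diag_mat P)"
      by (rule det_lower_triangular[of k]) (auto simp: P_def)
    also have "\<dots> = 1" by (simp add: prod_list_diag_prod P_def pc0)
    finally show ?thesis .
  qed
  have "det (U * (P * M)) = prod_list (diag_mat (U * (P * M)))"
    unfolding UPM
  proof (rule det_lower_triangular[of k])
    fix i j assume h: "i < j" "j < k"
    then show "mat k k (\<lambda>(i,j). T i j) $$ (i,j) = 0" using Te[of i j] by simp
  qed simp
  also have "\<dots> = (\<Prod>i = 0..<k. T i i)" unfolding UPM by (simp add: prod_list_diag_prod)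
  also have "\<dots> = T 0 0 * (\<Prod>i = Suc 0..<k. T i i)"
    using assms by (subst prod.atLeast_Suc_lessThan) auto
  also have "(\<Prod>i = Suc 0..<k. T i i) = 1"
  proof (rule prod.neutral, rule ballI)
    fix i assume "i \<in> {Suc 0..<k}"
    then show "T i i = 1" using Te[of i i] by simp
  qed
  also have "T 0 0 = 1 + (\<Sum>t<k. x^(t+1) * pp (t+1))" using Te[of 0 0] assms by simp
  finally have "det (U * (P * M)) = 1 + (\<Sum>t<k. x^(t+1) * pp (t+1))" by simp
  moreover have "det (U * (P * M)) = det U * (det P * det M)"
  proof -
    have c: "U \<in> carrier_mat k k" "P \<in> carrier_mat k k" "M \<in> carrier_mat k k"
      by (auto simp: U_def P_def M_def)
    have "P * M \<in> carrier_mat k k" using c by auto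
    then show ?thesis using c by (simp add: det_mult)
  qed
  ultimately show ?thesis using detU detP sum_shift_k[OF assms] by (simp add: M_def)
qed

end
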